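(* Let $L\ge1$ and $a_1,\dots,a_{2L}\ge0$ be integers, and let $\beta=x_1^{a_1}x_2^{a_2}\cdots x_1^{a_{2L-1}}x_2^{a_{2L}}\in\mathcal{B}_3$, with $D=\sum_{i=1}^{2L}a_i$ and $Z=\#\{i:1\le i\le 2L,\ a_i=0\}$. Then $\deg V_3(\beta)\le 3D-2L+2Z$.
   Context: $\mathcal{B}_3$ is the 3-strand braid group with Artin generators $x_1,x_2$; $V_3(\beta)$ is the Jones polynomial of the closure of $\beta$, normalized by $V(\text{unknot})=1$ and $q^{-1}V_{L_+}-qV_{L_-}=(q^{1/2}-q^{-1/2})V_{L_0}$, written as a Laurent polynomial in $s=q^{-1/2}$; $\deg$ is the highest exponent of $s$. Conventions: closures of $\alpha x_i^{e+2}\gamma$, $\alpha x_i^{e+1}\gamma$, $\alpha x_i^{e}\gamma$ play the roles of $L_-,L_0,L_+$ (e.g. the closure of $x_1^2\in\mathcal B_2$ has Jones polynomial $-s-s^5$). *)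

theory Defs
  imports "HOL-Computational_Algebra.Formal_Laurent_Series"
begin

text \<open>
Braid words on n strands: lists of nonzero integers g with |g| < n; the letter g stands
for x_{|g|} if g > 0 and for x_{|g|}^{-1} if g < 0.  Following the paper's convention
(closures of x_i^{e+2}, x_i^{e+1}, x_i^e play the roles of L_-, L_0, L_+), the generator
x_i is a NEGATIVE crossing.  The Jones polynomial is computed via the Kauffman bracket
state sum of the closed braid diagram, in the variable A (formal Laurent series over int,
variable fls_X), with s = q^(-1/2) = A^2.
\<close>

definition braid_word :: "nat \<Rightarrow> int list \<Rightarrow> bool" where
  "braid_word n w \<longleftrightarrow> (\<forall>g\<in>set w. g \<noteq> 0 \<and> nat \<bar>g\<bar> < n)"

text \<open>Points of the closed diagram after smoothing: (level j, strand k), 0 \<le> j \<le> length w,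
k < n; crossing j sits between level j and level j+1; level length w is glued to level 0.
S is the set of crossings receiving the cup-cap (e_i) smoothing; the others receive the
identity smoothing.\<close>

definition smooth_edges :: "nat \<Rightarrow> int list \<Rightarrow> nat set \<Rightarrow> ((nat \<times> nat) \<times> (nat \<times> nat)) set" where
  "smooth_edges n w S =
     {((length w, k), (0, k)) | k. k < n}
   \<union> {((j, k), (Suc j, k)) | j k. j < length w \<and> k < n \<and>
          (j \<notin> S \<or> (k \<noteq> nat \<bar>w ! j\<bar> - 1 \<and> k \<noteq> nat \<bar>w ! j\<bar>))}
   \<union> {((j, nat \<bar>w ! j\<bar> - 1), (j, nat \<bar>w ! j\<bar>)) | j. j < length w \<and> j \<in> S}
   \<union> {((Suc j, nat \<bar>w ! j\<bar> - 1), (Suc j, nat \<bar>w ! j\<bar>)) | j. j < length w \<and> j \<in> S}"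

definition smooth_points :: "nat \<Rightarrow> int list \<Rightarrow> (nat \<times> nat) set" where
  "smooth_points n w = {0..length w} \<times> {..<n}"

definition num_loops :: "nat \<Rightarrow> int list \<Rightarrow> nat set \<Rightarrow> nat" where
  "num_loops n w S =
     card ((\<lambda>v. {u. (v, u) \<in> (smooth_edges n w S \<union> (smooth_edges n w S)\<inverse>)\<^sup>*})
              ` smooth_points n w)"

text \<open>A-exponent of the state S: letter g > 0 (negative crossing) contributes A^(-1) for the
identity smoothing and A for the cup-cap smoothing; g < 0 the opposite.\<close>
definition state_exp :: "int list \<Rightarrow> nat set \<Rightarrow> int" where
  "state_exp w S = (\<Sum>j<length w. if j \<in> S then sgn (w ! j) else - sgn (w ! j))"

definition loop_val :: "int fls" where
  "loop_val = - (fls_X ^ 2) - (fls_X_inv ^ 2)"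

definition kauffman_bracket :: "nat \<Rightarrow> int list \<Rightarrow> int fls" where
  "kauffman_bracket n w =
     (\<Sum>S\<in>Pow {..<length w}. fls_X_intpow (state_exp w S) * loop_val ^ (num_loops n w S - 1))"

definition writhe :: "int list \<Rightarrow> int" where
  "writhe w = (\<Sum>g\<leftarrow>w. - sgn g)"

definition jones_A :: "nat \<Rightarrow> int list \<Rightarrow> int fls" where
  "jones_A n w = fls_const ((-1) ^ nat \<bar>writhe w\<bar>) * fls_X_intpow (-3 * writhe w) * kauffman_bracket n w"

text \<open>Coefficient of s^k in V_n(w), where s = q^(-1/2) = A^2.\<close>
definition jones_coeff :: "nat \<Rightarrow> int list \<Rightarrow> int \<Rightarrow> int" where
  "jones_coeff n w k = fls_nth (jones_A n w) (2 * k)"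

definition jones_deg :: "nat \<Rightarrow> int list \<Rightarrow> int" where
  "jones_deg n w = Max {k. jones_coeff n w k \<noteq> 0}"

definition alt_word :: "nat \<Rightarrow> (nat \<Rightarrow> nat) \<Rightarrow> int list" where
  "alt_word L a = concat (map (\<lambda>i. replicate (a i) (if odd i then 1 else 2)) [1..<2*L+1])"

end

theory Submission
  imports Defs
begin

unbundle fps_syntax



definition cls :: "('v \<times> 'v) set \<Rightarrow> 'v \<Rightarrow> 'v set" where
  "cls E v = {u. (v, u) \<in> (E \<union> E\<inverse>)\<^sup>*}"

definition comps :: "'v set \<Rightarrow> ('v \<times> 'v) set \<Rightarrow> nat" where
  "comps V E = card (cls E ` V)"

lemma num_loops_comps: "num_loops n w S = comps (smooth_points n w) (smooth_edges n w S)"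
  unfolding num_loops_def comps_def cls_def by simp

lemma rel_sym: "(u, v) \<in> (E \<union> E\<inverse>)\<^sup>* \<Longrightarrow> (v, u) \<in> (E \<union> E\<inverse>)\<^sup>*"
proof -
  assume "(u, v) \<in> (E \<union> E\<inverse>)\<^sup>*"
  hence "(v, u) \<in> ((E \<union> E\<inverse>)\<inverse>)\<^sup>*" by (simp add: rtrancl_converse)
  moreover have "(E \<union> E\<inverse>)\<inverse> = E \<union> E\<inverse>" by auto
  ultimately show ?thesis by simp
qed

lemma cls_eq_iff: "cls E u = cls E v \<longleftrightarrow> (u, v) \<in> (E \<union> E\<inverse>)\<^sup>*"
proof
  assume h: "cls E u = cls E v"
  have "v \<in> cls E v" by (simp add: cls_def)
  hence "v \<in> cls E u" using h by simp
  thus "(u, v) \<in> (E \<union> E\<inverse>)\<^sup>*" by (simp add: cls_def)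
next
  assume h: "(u, v) \<in> (E \<union> E\<inverse>)\<^sup>*"
  have h2: "(v, u) \<in> (E \<union> E\<inverse>)\<^sup>*" using h rel_sym by metis
  show "cls E u = cls E v" unfolding cls_def
    using h h2 rtrancl_trans by (metis (lifting))
qed

lemma card_le_map:
  assumes "finite V" "\<And>u v. u \<in> V \<Longrightarrow> v \<in> V \<Longrightarrow> f u = f v \<Longrightarrow> g u = g v"
  shows "card (g ` V) \<le> card (f ` V)"
proof -
  define h where "h C = g (SOME v. v \<in> V \<and> f v = C)" for C
  have "g ` V = h ` (f ` V)"
  proof (rule set_eqI, rule iffI)
    fix x assume "x \<in> g ` V"
    then obtain v where v: "v \<in> V" "x = g v" by auto
    have "\<exists>u. u \<in> V \<and> f u = f v" using v by auto
    hence "(SOME u. u \<in> V \<and> f u = f v) \<in> V \<and> f (SOME u. u \<in> V \<and> f u = f v) = f v"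
      by (rule someI_ex)
    hence "h (f v) = g v" unfolding h_def using assms(2) v by metis
    thus "x \<in> h ` (f ` V)" using v by (metis imageI)
  next
    fix x assume "x \<in> h ` (f ` V)"
    then obtain v where v: "v \<in> V" "x = h (f v)" by auto
    have "\<exists>u. u \<in> V \<and> f u = f v" using v by auto
    hence "(SOME u. u \<in> V \<and> f u = f v) \<in> V \<and> f (SOME u. u \<in> V \<and> f u = f v) = f v"
      by (rule someI_ex)
    hence "h (f v) = g v" unfolding h_def using assms(2) v by metis
    thus "x \<in> g ` V" using v by auto
  qed
  thus ?thesis using card_image_le assms(1) by (metis finite_imageI)
qed

lemma comps_mono:
  assumes "finite V" "E \<subseteq> E'"
  shows "comps V E' \<le> comps V E"
  unfolding comps_def
proof (rule card_le_map[OF assms(1)])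
  fix u v assume "cls E u = cls E v"
  hence "(u, v) \<in> (E \<union> E\<inverse>)\<^sup>*" by (simp add: cls_eq_iff)
  moreover have "E \<union> E\<inverse> \<subseteq> E' \<union> E'\<inverse>" using assms(2) by auto
  ultimately have "(u, v) \<in> (E' \<union> E'\<inverse>)\<^sup>*" using rtrancl_mono by blast
  thus "cls E' u = cls E' v" by (simp add: cls_eq_iff)
qed

lemma cls_insert_conn:
  assumes "(x, y) \<in> (E \<union> E\<inverse>)\<^sup>*"
  shows "cls (insert (x, y) E) = cls E"
proof -
  have a: "E \<union> E\<inverse> \<subseteq> insert (x, y) E \<union> (insert (x, y) E)\<inverse>" by auto
  have b: "insert (x, y) E \<union> (insert (x, y) E)\<inverse> \<subseteq> (E \<union> E\<inverse>)\<^sup>*"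
    using assms rel_sym by auto
  have "(insert (x, y) E \<union> (insert (x, y) E)\<inverse>)\<^sup>* = (E \<union> E\<inverse>)\<^sup>*"
    by (rule rtrancl_subset[OF a b])
  thus ?thesis unfolding cls_def by (intro ext) simp
qed

lemma comps_insert_conn:
  "(x, y) \<in> (E \<union> E\<inverse>)\<^sup>* \<Longrightarrow> comps V (insert (x, y) E) = comps V E"
  unfolding comps_def by (simp add: cls_insert_conn)

lemma comps_insert_ge:
  assumes "finite V"
  shows "comps V E \<le> comps V (insert (x, y) E) + 1"
proof -
  let ?R = "E \<union> E\<inverse>"
  let ?E' = "insert (x, y) E"
  define V0 where "V0 = {v \<in> V. (x, v) \<notin> ?R\<^sup>*}"
  have fin0: "finite V0" using assms V0_def by auto
  have sub: "cls E ` V \<subseteq> insert (cls E x) (cls E ` V0)"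
  proof
    fix C assume "C \<in> cls E ` V"
    then obtain v where v: "v \<in> V" "C = cls E v" by auto
    show "C \<in> insert (cls E x) (cls E ` V0)"
    proof (cases "(x, v) \<in> ?R\<^sup>*")
      case True
      hence "cls E x = cls E v" by (simp add: cls_eq_iff)
      thus ?thesis using v by auto
    next
      case False thus ?thesis using v V0_def by auto
    qed
  qed
  have "card (cls E ` V) \<le> card (insert (cls E x) (cls E ` V0))"
    by (rule card_mono[OF _ sub]) (simp add: fin0)
  also have "\<dots> \<le> card (cls E ` V0) + 1" by (simp add: card_insert_if fin0)
  also have "card (cls E ` V0) \<le> card (cls ?E' ` V0)"
  proof (rule card_le_map[OF fin0])
    fix u v assume u: "u \<in> V0" and v: "v \<in> V0" and eq: "cls ?E' u = cls ?E' v"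
    have nu: "(x, u) \<notin> ?R\<^sup>*" and nv: "(x, v) \<notin> ?R\<^sup>*" using u v V0_def by auto
    have nu': "(u, x) \<notin> ?R\<^sup>*" using nu rel_sym by metis
    have "(u, v) \<in> (?E' \<union> ?E'\<inverse>)\<^sup>*" using eq by (simp add: cls_eq_iff)
    moreover have "?E' \<union> ?E'\<inverse> = insert (x, y) (insert (y, x) ?R)" by auto
    ultimately have "(u, v) \<in> (insert (x, y) (insert (y, x) ?R))\<^sup>*" by simp
    hence "(u, v) \<in> ?R\<^sup>*" using nu nv nu'
      by (auto simp: rtrancl_insert intro: rtrancl_trans)
    thus "cls E u = cls E v" by (simp add: cls_eq_iff)
  qed
  also have "card (cls ?E' ` V0) \<le> card (cls ?E' ` V)"
    by (rule card_mono) (auto simp: assms V0_def)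
  finally show ?thesis unfolding comps_def by simp
qed

lemma comps_swap:
  assumes "finite V"
  shows "comps V (E \<union> {(p, q), (r, t)}) \<le> comps V (E \<union> {(p, r), (q, t)}) + 1"
proof -
  let ?G = "E \<union> {(p, q), (r, t)}"
  let ?G1 = "insert (p, r) ?G"
  let ?H = "insert (q, t) ?G1"
  have "comps V ?G \<le> comps V ?G1 + 1" by (rule comps_insert_ge[OF assms])
  moreover have "(q, t) \<in> (?G1 \<union> ?G1\<inverse>)\<^sup>*"
  proof -
    have "(q, p) \<in> ?G1 \<union> ?G1\<inverse>" "(p, r) \<in> ?G1 \<union> ?G1\<inverse>" "(r, t) \<in> ?G1 \<union> ?G1\<inverse>" by auto
    thus ?thesis by (meson r_into_rtrancl rtrancl_trans)
  qed
  hence "comps V ?H = comps V ?G1" by (rule comps_insert_conn)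
  moreover have "comps V ?H \<le> comps V (E \<union> {(p, r), (q, t)})"
    by (rule comps_mono[OF assms]) auto
  ultimately show ?thesis by linarith
qed




lemma e_close: "k < n \<Longrightarrow> ((length w, k), (0, k)) \<in> smooth_edges n w S"
  unfolding smooth_edges_def by blast

lemma e_vert: "j < length w \<Longrightarrow> k < n \<Longrightarrow> (j \<notin> S \<or> (k \<noteq> nat \<bar>w ! j\<bar> - 1 \<and> k \<noteq> nat \<bar>w ! j\<bar>))
  \<Longrightarrow> ((j, k), (Suc j, k)) \<in> smooth_edges n w S"
  unfolding smooth_edges_def by blast

lemma e_cup: "j < length w \<Longrightarrow> j \<in> S \<Longrightarrow> ((j, nat \<bar>w ! j\<bar> - 1), (j, nat \<bar>w ! j\<bar>)) \<in> smooth_edges n w S"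
  unfolding smooth_edges_def by blast

lemma e_cap: "j < length w \<Longrightarrow> j \<in> S \<Longrightarrow> ((Suc j, nat \<bar>w ! j\<bar> - 1), (Suc j, nat \<bar>w ! j\<bar>)) \<in> smooth_edges n w S"
  unfolding smooth_edges_def by blast

lemma toggle_edges:
  assumes j: "j < length w" "j \<notin> S" and c: "c = nat \<bar>w ! j\<bar>" "1 \<le> c" "c < n"
  shows "smooth_edges n w (insert j S) =
           (smooth_edges n w S - {((j, c-1), (Suc j, c-1)), ((j, c), (Suc j, c))})
           \<union> {((j, c-1), (j, c)), ((Suc j, c-1), (Suc j, c))}"
    and "smooth_edges n w S =
           (smooth_edges n w S - {((j, c-1), (Suc j, c-1)), ((j, c), (Suc j, c))})
           \<union> {((j, c-1), (Suc j, c-1)), ((j, c), (Suc j, c))}"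
proof -
  show "smooth_edges n w S =
           (smooth_edges n w S - {((j, c-1), (Suc j, c-1)), ((j, c), (Suc j, c))})
           \<union> {((j, c-1), (Suc j, c-1)), ((j, c), (Suc j, c))}"
    using e_vert[of j w "c-1" n S] e_vert[of j w c n S] j c by auto
  show "smooth_edges n w (insert j S) =
           (smooth_edges n w S - {((j, c-1), (Suc j, c-1)), ((j, c), (Suc j, c))})
           \<union> {((j, c-1), (j, c)), ((Suc j, c-1), (Suc j, c))}"
  proof (rule set_eqI)
    fix e :: "(nat \<times> nat) \<times> (nat \<times> nat)"
    obtain a b a' b' where e: "e = ((a, b), (a', b'))" by (metis prod.exhaust)
    show "e \<in> smooth_edges n w (insert j S) \<longleftrightarrow> e \<in> (smooth_edges n w S - {((j, c-1), (Suc j, c-1)), ((j, c), (Suc j, c))})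
           \<union> {((j, c-1), (j, c)), ((Suc j, c-1), (Suc j, c))}"
      unfolding e smooth_edges_def using j c
      apply (simp only: Un_iff mem_Collect_eq Diff_iff insert_iff empty_iff prod.inject)
      apply (cases "a = j"; cases "a' = Suc j"; cases "a = Suc j"; cases "a' = j")
      apply auto
      done
  qed
qed

lemma finite_points: "finite (smooth_points n w)"
  unfolding smooth_points_def by simp

lemma loops_toggle:
  assumes j: "j < length w" "j \<notin> S" and c: "1 \<le> nat \<bar>w ! j\<bar>" "nat \<bar>w ! j\<bar> < n"
  shows "num_loops n w (insert j S) \<le> num_loops n w S + 1"
    and "num_loops n w S \<le> num_loops n w (insert j S) + 1"
proof -
  define c where "c = nat \<bar>w ! j\<bar>"
  define E0 where "E0 = smooth_edges n w S - {((j, c-1), (Suc j, c-1)), ((j, c), (Suc j, c))}"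
  have A: "smooth_edges n w (insert j S) = E0 \<union> {((j, c-1), (j, c)), ((Suc j, c-1), (Suc j, c))}"
    using toggle_edges(1)[OF j c_def] c unfolding E0_def c_def by simp
  have B: "smooth_edges n w S = E0 \<union> {((j, c-1), (Suc j, c-1)), ((j, c), (Suc j, c))}"
    using toggle_edges(2)[OF j c_def] c unfolding E0_def c_def by simp
  show "num_loops n w (insert j S) \<le> num_loops n w S + 1"
    unfolding num_loops_comps A B by (rule comps_swap[OF finite_points])
  show "num_loops n w S \<le> num_loops n w (insert j S) + 1"
    unfolding num_loops_comps A B by (rule comps_swap[OF finite_points])
qed




abbreviation conn :: "nat \<Rightarrow> int list \<Rightarrow> nat set \<Rightarrow> nat \<times> nat \<Rightarrow> nat \<times> nat \<Rightarrow> bool" where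
  "conn n w S u v \<equiv> (u, v) \<in> (smooth_edges n w S \<union> (smooth_edges n w S)\<inverse>)\<^sup>*"

lemma conn_edge: "(u, v) \<in> smooth_edges n w S \<Longrightarrow> conn n w S u v"
  by blast
lemma conn_edge': "(u, v) \<in> smooth_edges n w S \<Longrightarrow> conn n w S v u"
  by blast
lemma conn_trans: "conn n w S u v \<Longrightarrow> conn n w S v x \<Longrightarrow> conn n w S u x"
  by (rule rtrancl_trans)
lemma conn_sym: "conn n w S u v \<Longrightarrow> conn n w S v u"
  by (rule rel_sym)

lemma bw_letter:
  assumes "braid_word n w" "j < length w"
  shows "1 \<le> nat \<bar>w ! j\<bar>" "nat \<bar>w ! j\<bar> < n"
proof -
  have "w ! j \<in> set w" using assms(2) by simp
  hence "w ! j \<noteq> 0 \<and> nat \<bar>w ! j\<bar> < n" using assms(1) unfolding braid_word_def by blast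
  thus "1 \<le> nat \<bar>w ! j\<bar>" "nat \<bar>w ! j\<bar> < n" by arith+
qed

lemma comps_le_reps:
  assumes "finite R" "\<And>v. v \<in> V \<Longrightarrow> \<exists>r\<in>R. (v, r) \<in> (E \<union> E\<inverse>)\<^sup>*"
  shows "comps V E \<le> card R"
proof -
  have "cls E ` V \<subseteq> cls E ` R"
  proof
    fix C assume "C \<in> cls E ` V"
    then obtain v where v: "v \<in> V" "C = cls E v" by auto
    then obtain r where "r \<in> R" "(v, r) \<in> (E \<union> E\<inverse>)\<^sup>*" using assms(2) by blast
    thus "C \<in> cls E ` R" using v by (auto simp: cls_eq_iff)
  qed
  hence "card (cls E ` V) \<le> card (cls E ` R)" by (simp add: card_mono assms(1))
  also have "\<dots> \<le> card R" by (rule card_image_le[OF assms(1)])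
  finally show ?thesis unfolding comps_def .
qed

lemma conn_vert:
  assumes "b \<le> length w" "k < n"
    "\<And>i. a \<le> i \<Longrightarrow> i < b \<Longrightarrow> i \<notin> S \<or> (k \<noteq> nat \<bar>w ! i\<bar> - 1 \<and> k \<noteq> nat \<bar>w ! i\<bar>)"
  shows "a \<le> b \<Longrightarrow> conn n w S (a, k) (b, k)"
  using assms
proof (induction b)
  case 0 thus ?case by simp
next
  case (Suc b)
  show ?case
  proof (cases "a = Suc b")
    case True thus ?thesis by simp
  next
    case False
    hence "a \<le> b" using Suc by simp
    hence "conn n w S (a, k) (b, k)" using Suc by simp
    moreover have "((b, k), (Suc b, k)) \<in> smooth_edges n w S"
      using Suc.prems \<open>a \<le> b\<close> by (intro e_vert) auto
    ultimately show ?thesis by (meson conn_edge conn_trans)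
  qed
qed

lemma chain_aux:
  assumes bw: "braid_word n w" and fin: "finite X"
  shows "X \<inter> S = {} \<Longrightarrow> X \<subseteq> {..<length w} \<Longrightarrow> finite S \<Longrightarrow>
     card S + num_loops n w S \<le> card (S \<union> X) + num_loops n w (S \<union> X) \<and>
     num_loops n w (S \<union> X) + card S \<le> num_loops n w S + card (S \<union> X)"
  using fin
proof (induction X rule: finite_induct)
  case empty thus ?case by simp
next
  case (insert x X)
  have x: "x < length w" "x \<notin> S \<union> X" using insert by auto
  have c: "1 \<le> nat \<bar>w ! x\<bar>" "nat \<bar>w ! x\<bar> < n"
    using bw_letter[OF bw x(1)] by auto
  have e: "S \<union> insert x X = insert x (S \<union> X)" by auto
  have cd: "card (insert x (S \<union> X)) = card (S \<union> X) + 1"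
    using x insert by simp
  have IH: "card S + num_loops n w S \<le> card (S \<union> X) + num_loops n w (S \<union> X) \<and>
     num_loops n w (S \<union> X) + card S \<le> num_loops n w S + card (S \<union> X)"
    using insert by auto
  show ?case unfolding e cd
    using IH loops_toggle[OF x c] by linarith
qed

lemma chain:
  assumes "braid_word n w" "S \<subseteq> T" "T \<subseteq> {..<length w}"
  shows "card S + num_loops n w S \<le> card T + num_loops n w T"
    and "num_loops n w T + card S \<le> num_loops n w S + card T"
proof -
  have fT: "finite T" using assms finite_subset by blast
  have fS: "finite S" using assms fT finite_subset by blast
  have "T = S \<union> (T - S)" using assms by auto
  moreover note chain_aux[OF assms(1), of "T - S" S] fT fS assms
  ultimately show "card S + num_loops n w S \<le> card T + num_loops n w T"
    and "num_loops n w T + card S \<le> num_loops n w S + card T"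
    by (metis Diff_disjoint Diff_subset finite_Diff inf_commute order_trans)+
qed

lemma loops_pos: "1 \<le> n \<Longrightarrow> 1 \<le> num_loops n w S"
proof -
  assume n: "1 \<le> n"
  let ?E = "smooth_edges n w S"
  have "(0, 0) \<in> smooth_points n w" using n unfolding smooth_points_def by auto
  hence "cls ?E ` smooth_points n w \<noteq> {}" by auto
  moreover have "finite (cls ?E ` smooth_points n w)" by (simp add: finite_points)
  ultimately show ?thesis unfolding num_loops_comps comps_def
    by (metis One_nat_def Suc_leI card_gt_0_iff)
qed

lemma loops_le3: "num_loops 3 w S \<le> 3 * (length w + 1)"
proof -
  have "num_loops 3 w S \<le> card (smooth_points 3 w)"
    unfolding num_loops_comps comps_def by (rule card_image_le[OF finite_points])
  thus ?thesis unfolding smooth_points_def by (simp add: card_cartesian_product)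
qed

lemma empty_snd:
  assumes "conn n w {} u v" shows "snd u = snd v"
  using assms
proof (induction rule: rtrancl_induct)
  case base thus ?case by simp
next
  case (step y z)
  thus ?case unfolding smooth_edges_def by auto
qed

lemma loops_empty_ge: "3 \<le> num_loops 3 w {}"
proof -
  let ?E = "smooth_edges 3 w {}"
  have sub: "cls ?E ` {(0,0),(0,1),(0,2)} \<subseteq> cls ?E ` smooth_points 3 w"
    unfolding smooth_points_def by auto
  have "inj_on (cls ?E) {(0,0),(0,1),(0,2)}"
  proof (rule inj_onI)
    fix u v assume "u \<in> {(0::nat,0::nat),(0,1),(0,2)}" "v \<in> {(0::nat,0::nat),(0,1),(0,2)}"
      "cls ?E u = cls ?E v"
    moreover hence "snd u = snd v" using empty_snd by (metis cls_eq_iff)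
    ultimately show "u = v" by auto
  qed
  hence "card (cls ?E ` {(0,0),(0,1),(0,2)}) = 3" by (simp add: card_image)
  moreover have "card (cls ?E ` {(0,0),(0,1),(0,2)}) \<le> card (cls ?E ` smooth_points 3 w)"
    by (rule card_mono[OF _ sub]) (simp add: finite_points)
  ultimately show ?thesis unfolding num_loops_comps comps_def by simp
qed

lemma loops_single:
  assumes bw: "braid_word 3 w" and j: "j < length w"
  shows "num_loops 3 w {j} \<le> 2"
proof -
  define c where "c = nat \<bar>w ! j\<bar>"
  have c: "1 \<le> c" "c < 3" using bw_letter[OF bw j] unfolding c_def by auto
  let ?N = "length w"
  have lvl0: "conn 3 w {j} (i, k) (0, k)" if "i \<le> ?N" "k < 3" for i k
  proof (cases "i \<le> j")
    case True
    have "conn 3 w {j} (0, k) (i, k)"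
      by (rule conn_vert) (use that True in auto)
    thus ?thesis by (rule conn_sym)
  next
    case False
    have "conn 3 w {j} (i, k) (?N, k)"
      by (rule conn_vert) (use that False in auto)
    moreover have "conn 3 w {j} (?N, k) (0, k)" using e_close that by (metis conn_edge)
    ultimately show ?thesis by (rule conn_trans)
  qed
  have "conn 3 w {j} (0, c - 1) (j, c - 1)"
    by (rule conn_vert) (use j c in auto)
  moreover have "conn 3 w {j} (j, c - 1) (j, c)"
    using e_cup[of j w "{j}" 3] j unfolding c_def by (metis conn_edge singletonI)
  moreover have "conn 3 w {j} (j, c) (0, c)" using lvl0 j c by simp
  ultimately have cc: "conn 3 w {j} (0, c) (0, c - 1)" by (meson conn_trans conn_sym)
  define R where "R = (\<lambda>k. (0::nat, k)) ` ({..<3} - {c})"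
  have "num_loops 3 w {j} \<le> card R"
    unfolding num_loops_comps
  proof (rule comps_le_reps)
    show "finite R" unfolding R_def by simp
  next
    fix v assume "v \<in> smooth_points 3 w"
    then obtain i k where v: "v = (i, k)" "i \<le> ?N" "k < 3" unfolding smooth_points_def by auto
    show "\<exists>r\<in>R. conn 3 w {j} v r"
    proof (cases "k = c")
      case True
      hence "conn 3 w {j} v (0, c - 1)" using lvl0 v cc conn_trans by blast
      moreover have "(0, c - 1) \<in> R" unfolding R_def using c by auto
      ultimately show ?thesis by blast
    next
      case False
      hence "(0, k) \<in> R" unfolding R_def using v by auto
      thus ?thesis using lvl0 v by blast
    qed
  qed
  also have "card R \<le> card ({..<3::nat} - {c})" unfolding R_def by (rule card_image_le) simp
  also have "\<dots> = 2" using c by simp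
  finally show ?thesis .
qed




definition eqset :: "int list \<Rightarrow> nat set" where
  "eqset w = {j. 0 < j \<and> j < length w \<and> w ! (j - 1) = w ! j}"

context
  fixes w :: "int list"
  assumes lt: "\<And>j. j < length w \<Longrightarrow> w ! j = 1 \<or> w ! j = 2"
begin

abbreviation "CA \<equiv> conn 3 w {..<length w}"

lemma l1:
  assumes "i < length w" "w ! i = 1"
  shows "CA (i, 0) (i, 1)" "CA (Suc i, 0) (Suc i, 1)" "CA (i, 2) (Suc i, 2)"
proof -
  show "CA (i, 0) (i, 1)" using e_cup[of i w "{..<length w}" 3] assms by (intro conn_edge) simp
  show "CA (Suc i, 0) (Suc i, 1)" using e_cap[of i w "{..<length w}" 3] assms by (intro conn_edge) simp
  show "CA (i, 2) (Suc i, 2)" using e_vert[of i w 2 3 "{..<length w}"] assms by (intro conn_edge) simp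
qed

lemma l2:
  assumes "i < length w" "w ! i = 2"
  shows "CA (i, 1) (i, 2)" "CA (Suc i, 1) (Suc i, 2)" "CA (i, 0) (Suc i, 0)"
proof -
  show "CA (i, 1) (i, 2)" using e_cup[of i w "{..<length w}" 3] assms by (intro conn_edge) simp
  show "CA (Suc i, 1) (Suc i, 2)" using e_cap[of i w "{..<length w}" 3] assms by (intro conn_edge) simp
  show "CA (i, 0) (Suc i, 0)" using e_vert[of i w 0 3 "{..<length w}"] assms by (intro conn_edge) simp
qed

lemma cl: "k < 3 \<Longrightarrow> CA (length w, k) (0, k)"
  using e_close by (metis conn_edge)

definition sm :: "nat \<Rightarrow> nat \<Rightarrow> bool" where
  "sm i k \<longleftrightarrow> i \<in> eqset w \<and> (k = nat \<bar>w ! i\<bar> - 1 \<or> k = nat \<bar>w ! i\<bar>)"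

lemma levels: "i \<le> length w \<Longrightarrow> k < 3 \<Longrightarrow> sm i k \<or> (\<exists>k'<3. CA (i, k) (0, k'))"
proof (induction i arbitrary: k)
  case 0 thus ?case by blast
next
  case (Suc i)
  have i: "i < length w" using Suc by simp
  show ?case
  proof (cases "Suc i = length w")
    case True thus ?thesis using cl[of k] Suc.prems by auto
  next
    case False
    hence si: "Suc i < length w" using Suc by simp
    have nsm: "\<not> sm i (if w ! i = 1 then 2 else 0)"
      unfolding sm_def using lt[OF i] by auto
    have base: "\<exists>k'<3. CA (i, if w ! i = 1 then 2 else 0) (0, k')"
      using Suc.IH[of "if w ! i = 1 then 2 else 0"] nsm i by auto
    then obtain k' where k': "k' < 3" "CA (i, if w ! i = 1 then 2 else 0) (0, k')" by blast
    show ?thesis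
    proof (cases "w ! Suc i = w ! i")
      case True
      hence ins: "Suc i \<in> eqset w" unfolding eqset_def using si by simp
      show ?thesis
      proof (cases "w ! i = 1")
        case w1: True
        have "k = 2 \<or> sm (Suc i) k" unfolding sm_def using ins True w1 Suc.prems by auto
        moreover have "CA (Suc i, 2) (0, k')" using conn_trans[OF conn_sym[OF l1(3)[OF i w1]]] k' w1 by simp
        ultimately show ?thesis using k' by blast
      next
        case w2: False
        hence w2: "w ! i = 2" using lt[OF i] by simp
        have "k = 0 \<or> sm (Suc i) k" unfolding sm_def using ins True w2 Suc.prems by auto
        moreover have "CA (Suc i, 0) (0, k')" using conn_trans[OF conn_sym[OF l2(3)[OF i w2]]] k' w2 by simp
        ultimately show ?thesis using k' by blast
      qed
    next
      case False
      show ?thesis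
      proof (cases "w ! i = 1")
        case w1: True
        hence w2': "w ! Suc i = 2" using lt[OF si] False by simp
        have A: "CA (Suc i, 2) (0, k')" using conn_trans[OF conn_sym[OF l1(3)[OF i w1]]] k' w1 by simp
        have B: "CA (Suc i, 1) (Suc i, 2)" using l2(1)[OF si w2'] .
        have C: "CA (Suc i, 0) (Suc i, 1)" using l1(2)[OF i w1] .
        have "k = 0 \<or> k = 1 \<or> k = 2" using Suc.prems by auto
        moreover have "CA (Suc i, 1) (0, k')" using conn_trans[OF B A] .
        moreover have "CA (Suc i, 0) (0, k')" using conn_trans[OF C \<open>CA (Suc i, 1) (0, k')\<close>] .
        ultimately show ?thesis using A k'(1) by blast
      next
        case w2: False
        hence w2: "w ! i = 2" using lt[OF i] by simp
        hence w1': "w ! Suc i = 1" using lt[OF si] False by simp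
        have A: "CA (Suc i, 0) (0, k')" using conn_trans[OF conn_sym[OF l2(3)[OF i w2]]] k' w2 by simp
        have B: "CA (Suc i, 0) (Suc i, 1)" using l1(1)[OF si w1'] .
        have C: "CA (Suc i, 1) (Suc i, 2)" using l2(2)[OF i w2] .
        have "k = 0 \<or> k = 1 \<or> k = 2" using Suc.prems by auto
        moreover have "CA (Suc i, 1) (0, k')" using conn_trans[OF conn_sym[OF B] A] .
        moreover have "CA (Suc i, 2) (0, k')" using conn_trans[OF conn_sym[OF C] \<open>CA (Suc i, 1) (0, k')\<close>] .
        ultimately show ?thesis using A k'(1) by blast
      qed
    qed
  qed
qed

lemma loops_all:
  assumes N: "length w \<ge> 1"
  shows "num_loops 3 w {..<length w} \<le> card (eqset w) + 1 + (if w ! (length w - 1) = w ! 0 then 1 else 0)"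
proof -
  let ?N = "length w"
  define o0 where "o0 = (if w ! 0 = 1 then 2 else (0::nat))"
  define R where "R = (\<lambda>j. (j, nat \<bar>w ! j\<bar> - 1)) ` eqset w \<union> {(0, 1)} \<union>
     (if w ! (?N - 1) = w ! 0 then {(0, o0)} else {})"
  have fe: "finite (eqset w)" unfolding eqset_def by simp
  have wne: "w \<noteq> []" using N by auto
  have w0: "w ! 0 = 1 \<or> w ! 0 = 2" using lt[of 0] N by (cases w) auto
  have lev0: "\<exists>r\<in>R. CA (0, k) r" if "k < 3" for k
  proof -
    have "(0, 1) \<in> R" unfolding R_def by simp
    show ?thesis
    proof (cases "k = o0")
      case True
      show ?thesis
      proof (cases "w ! (?N - 1) = w ! 0")
        case True thus ?thesis using \<open>k = o0\<close> unfolding R_def by auto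
      next
        case False
        have ln: "?N - 1 < ?N" "Suc (?N - 1) = ?N" using N by auto
        have wl: "w ! (?N - 1) = 1 \<or> w ! (?N - 1) = 2" using lt ln by simp
        have "CA (0, k) (0, 1)"
        proof (cases "w ! 0 = 1")
          case True
          hence "w ! (?N - 1) = 2" using False wl by simp
          from l2(2)[OF ln(1) this] have "CA (?N, 1) (?N, 2)" using ln by simp
          moreover have "k = 2" using \<open>k = o0\<close> True o0_def by simp
          moreover have "CA (?N, 1) (0, 1)" "CA (?N, 2) (0, 2)" using cl[of 1] cl[of 2] by simp_all
          ultimately show ?thesis using conn_trans[OF conn_sym[OF \<open>CA (?N, 2) (0, 2)\<close>] conn_trans[OF conn_sym[OF \<open>CA (?N, 1) (?N, 2)\<close>] \<open>CA (?N, 1) (0, 1)\<close>]] by simp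
        next
          case f: False
          hence "w ! (?N - 1) = 1" using False wl w0 by auto
          from l1(2)[OF ln(1) this] have "CA (?N, 0) (?N, 1)" using ln by simp
          moreover have "k = 0" using \<open>k = o0\<close> f o0_def by simp
          moreover have "CA (?N, 1) (0, 1)" "CA (?N, 0) (0, 0)" using cl[of 1] cl[of 0] by simp_all
          ultimately show ?thesis using conn_trans[OF conn_sym[OF \<open>CA (?N, 0) (0, 0)\<close>] conn_trans[OF \<open>CA (?N, 0) (?N, 1)\<close> \<open>CA (?N, 1) (0, 1)\<close>]] by simp
        qed
        thus ?thesis using \<open>(0, 1) \<in> R\<close> by blast
      qed
    next
      case False
      have "CA (0, k) (0, 1)"
      proof (cases "w ! 0 = 1")
        case True
        hence "k = 0 \<or> k = 1" using False that o0_def by auto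
        thus ?thesis using l1(1)[of 0 , OF _ True] wne by auto
      next
        case f: False
        hence "w ! 0 = 2" using w0 by simp
        hence "k = 1 \<or> k = 2" using False that o0_def by auto
        moreover have "CA (0, 1) (0, 2)" using l2(1)[of 0 , OF _ \<open>w ! 0 = 2\<close>] wne by simp
        ultimately show ?thesis using conn_sym by blast
      qed
      thus ?thesis using \<open>(0, 1) \<in> R\<close> by blast
    qed
  qed
  have "num_loops 3 w {..<?N} \<le> card R"
    unfolding num_loops_comps
  proof (rule comps_le_reps)
    show "finite R" unfolding R_def using fe by simp
  next
    fix v assume "v \<in> smooth_points 3 w"
    then obtain i k where v: "v = (i, k)" "i \<le> ?N" "k < 3" unfolding smooth_points_def by auto
    from levels[OF v(2,3)] show "\<exists>r\<in>R. CA v r"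
    proof
      assume s: "sm i k"
      hence ie: "i \<in> eqset w" and ik: "k = nat \<bar>w ! i\<bar> - 1 \<or> k = nat \<bar>w ! i\<bar>" unfolding sm_def by auto
      have iN: "i < ?N" using ie unfolding eqset_def by simp
      have r: "(i, nat \<bar>w ! i\<bar> - 1) \<in> R" unfolding R_def using ie by auto
      have "CA (i, nat \<bar>w ! i\<bar> - 1) (i, nat \<bar>w ! i\<bar>)"
        using e_cup[of i w "{..<?N}" 3] iN by (intro conn_edge) simp
      hence "CA (i, k) (i, nat \<bar>w ! i\<bar> - 1)" using ik conn_sym by blast
      thus ?thesis using r v by blast
    next
      assume "\<exists>k'<3. CA (i, k) (0, k')"
      then obtain k' where "k' < 3" "CA (i, k) (0, k')" by blast
      moreover obtain r where "r \<in> R" "CA (0, k') r" using lev0 \<open>k' < 3\<close> by blast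
      ultimately show ?thesis using conn_trans v by blast
    qed
  qed
  also have "card R \<le> card (eqset w) + 1 + (if w ! (?N - 1) = w ! 0 then 1 else 0)"
  proof -
    have "card R \<le> card ((\<lambda>j. (j, nat \<bar>w ! j\<bar> - 1)) ` eqset w \<union> {(0, 1)}) +
       card (if w ! (?N - 1) = w ! 0 then {(0::nat, o0)} else {})"
      unfolding R_def by (rule card_Un_le)
    also have "\<dots> \<le> card ((\<lambda>j. (j, nat \<bar>w ! j\<bar> - 1)) ` eqset w) + 1 +
       card (if w ! (?N - 1) = w ! 0 then {(0::nat, o0)} else {})"
      using card_Un_le[of "(\<lambda>j. (j, nat \<bar>w ! j\<bar> - 1)) ` eqset w" "{(0::nat, 1::nat)}"] by simp
    also have "\<dots> \<le> card (eqset w) + 1 + (if w ! (?N - 1) = w ! 0 then 1 else 0)"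
      using card_image_le[OF fe, of "\<lambda>j. (j, nat \<bar>w ! j\<bar> - 1)"] by simp
    finally show ?thesis .
  qed
  finally show ?thesis .
qed

end




lemma eqset_Nil [simp]: "eqset [] = {}" unfolding eqset_def by simp

lemma eqset_snoc:
  "card (eqset (w @ [x])) = card (eqset w) + (if w \<noteq> [] \<and> last w = x then 1 else 0)"
proof -
  have "eqset (w @ [x]) = eqset w \<union> (if w \<noteq> [] \<and> last w = x then {length w} else {})"
  proof (rule set_eqI)
    fix j
    show "j \<in> eqset (w @ [x]) \<longleftrightarrow> j \<in> eqset w \<union> (if w \<noteq> [] \<and> last w = x then {length w} else {})"
    proof (cases "j < length w")
      case True thus ?thesis unfolding eqset_def by (auto simp: nth_append)
    next
      case False
      show ?thesis
      proof (cases "j = length w")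
        case True
        thus ?thesis unfolding eqset_def using False
          by (cases w rule: rev_cases) (auto simp: nth_append)
      next
        case f2: False thus ?thesis unfolding eqset_def using False by auto
      qed
    qed
  qed
  moreover have "length w \<notin> eqset w" unfolding eqset_def by auto
  moreover have "finite (eqset w)" unfolding eqset_def by auto
  ultimately show ?thesis by auto
qed

lemma eqset_rep:
  "m \<ge> 1 \<Longrightarrow> card (eqset (w @ replicate m x)) = card (eqset w) + (m - 1) + (if w \<noteq> [] \<and> last w = x then 1 else 0)"
proof (induction m)
  case 0 thus ?case by simp
next
  case (Suc m)
  show ?case
  proof (cases "m = 0")
    case True thus ?thesis using eqset_snoc[of w x] by simp
  next
    case False
    have "w @ replicate (Suc m) x = (w @ replicate m x) @ [x]"
      by (simp add: replicate_append_same)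
    moreover have "last (w @ replicate m x) = x" using False by simp
    ultimately show ?thesis using eqset_snoc[of "w @ replicate m x" x] Suc False by simp
  qed
qed

definition letter :: "nat \<Rightarrow> int" where "letter i = (if odd i then 1 else 2)"

definition WW :: "(nat \<Rightarrow> nat) \<Rightarrow> nat \<Rightarrow> int list" where
  "WW a K = concat (map (\<lambda>i. replicate (a i) (letter i)) [1..<K+1])"

lemma WW_0: "WW a 0 = []" unfolding WW_def by simp
lemma WW_Suc: "WW a (Suc K) = WW a K @ replicate (a (Suc K)) (letter (Suc K))"
  unfolding WW_def by simp

lemma alt_WW: "alt_word L a = WW a (2 * L)"
  unfolding alt_word_def WW_def letter_def by simp

lemma WW_len: "length (WW a K) = (\<Sum>i=1..K. a i)"
  by (induction K) (simp_all add: WW_0 WW_Suc)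

lemma WW_set: "set (WW a K) \<subseteq> {1, 2}"
  by (induction K) (auto simp: WW_0 WW_Suc letter_def)

lemma card_Suc_filter:
  "card {i\<in>{1..Suc K}. P i} = card {i\<in>{1..K}. P i} + (if P (Suc K) then 1 else 0)"
proof -
  have "{i\<in>{1..Suc K}. P i} = {i\<in>{1..K}. P i} \<union> (if P (Suc K) then {Suc K} else {})" by (auto simp: le_Suc_eq)
  thus ?thesis by auto
qed

lemma WW_inv:
  "WW a K \<noteq> [] \<Longrightarrow>
    int (length (WW a K)) - int (card (eqset (WW a K))) + int (card {i\<in>{1..K}. a i = 0})
    \<ge> int (card {i\<in>{1..K}. a i \<noteq> 0}) + (if last (WW a K) \<noteq> letter K then 1 else 0)
       + (if WW a K ! 0 \<noteq> 1 then 1 else 0)"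
proof (induction K)
  case 0 thus ?case by (simp add: WW_0)
next
  case (Suc K)
  let ?w = "WW a K"
  let ?m = "a (Suc K)"
  let ?x = "letter (Suc K)"
  have Zs: "card {i\<in>{1..Suc K}. a i = 0} = card {i\<in>{1..K}. a i = 0} + (if ?m = 0 then 1 else 0)"
    by (rule card_Suc_filter)
  have Ps: "card {i\<in>{1..Suc K}. a i \<noteq> 0} = card {i\<in>{1..K}. a i \<noteq> 0} + (if ?m \<noteq> 0 then 1 else 0)"
    by (rule card_Suc_filter)
  show ?case
  proof (cases "?m = 0")
    case True
    hence e: "WW a (Suc K) = ?w" by (simp add: WW_Suc)
    hence "?w \<noteq> []" using Suc.prems by simp
    hence "int (length ?w) - int (card (eqset ?w)) + int (card {i\<in>{1..K}. a i = 0})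
      \<ge> int (card {i\<in>{1..K}. a i \<noteq> 0}) + (if last ?w \<noteq> letter K then 1 else 0)
       + (if ?w ! 0 \<noteq> 1 then 1 else 0)" using Suc.IH by simp
    thus ?thesis unfolding e Zs Ps using True by (simp split: if_splits)
  next
    case False
    hence m: "?m \<ge> 1" by simp
    have e: "WW a (Suc K) = ?w @ replicate ?m ?x" by (simp add: WW_Suc)
    have cE: "card (eqset (WW a (Suc K))) = card (eqset ?w) + (?m - 1) + (if ?w \<noteq> [] \<and> last ?w = ?x then 1 else 0)"
      unfolding e by (rule eqset_rep[OF m])
    have lst: "last (WW a (Suc K)) = ?x" unfolding e using m by simp
    have ln: "length (WW a (Suc K)) = length ?w + ?m" unfolding e by simp
    show ?thesis
    proof (cases "?w = []")
      case True
      have "(\<Sum>i=1..K. a i) = 0" using True WW_len[of a K] by simp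
      hence z: "\<forall>i\<in>{1..K}. a i = 0" by simp
      hence "{i\<in>{1..K}. a i = 0} = {1..K}" by auto
      hence Z: "card {i\<in>{1..K}. a i = 0} = K" by simp
      have "{i\<in>{1..K}. a i \<noteq> 0} = {}" using z by auto
      hence P: "card {i\<in>{1..K}. a i \<noteq> 0} = 0" by simp
      have h0: "WW a (Suc K) ! 0 = ?x" unfolding e using True m by simp
      have "?x \<noteq> 1 \<Longrightarrow> K \<ge> 1" unfolding letter_def by (cases K) auto
      thus ?thesis unfolding ln cE Zs Ps Z P h0 using True False lst m by auto
    next
      case ne: False
      have h0: "WW a (Suc K) ! 0 = ?w ! 0" unfolding e using ne by (simp add: nth_append)
      have IH: "int (length ?w) - int (card (eqset ?w)) + int (card {i\<in>{1..K}. a i = 0})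
        \<ge> int (card {i\<in>{1..K}. a i \<noteq> 0}) + (if last ?w \<noteq> letter K then 1 else 0)
         + (if ?w ! 0 \<noteq> 1 then 1 else 0)" using Suc.IH ne by simp
      have lx: "letter K \<noteq> ?x" unfolding letter_def by auto
      have "(if last ?w = ?x then 1 else 0) \<le> (if last ?w \<noteq> letter K then 1 else (0::int))"
        using lx by auto
      thus ?thesis unfolding ln cE Zs Ps h0 lst using IH ne False m by (simp split: if_splits)
    qed
  qed
qed






lemma loop_val_alt: "loop_val = - fls_shift (-2) 1 - fls_shift 2 1"
  unfolding loop_val_def fls_X_power_conv_shift_1 fls_X_inv_power_conv_shift_1 by simp

lemma lv_mult: "(f * loop_val) $$ t = - f $$ (t - 2) - f $$ (t + 2)"
proof -
  have "f * loop_val = - fls_shift (-2) f - fls_shift 2 f"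
    unfolding loop_val_alt by (simp add: algebra_simps fls_shifted_times_simps)
  thus ?thesis by simp
qed

lemma lv_pow:
  "(t > 2 * int p \<longrightarrow> (loop_val ^ p) $$ t = 0) \<and> (t < - 2 * int p \<longrightarrow> (loop_val ^ p) $$ t = 0)
   \<and> (loop_val ^ p) $$ (- 2 * int p) = (-1) ^ p"
proof (induction p arbitrary: t)
  case 0 thus ?case by simp
next
  case (Suc p)
  have e: "loop_val ^ Suc p = loop_val ^ p * loop_val" by (simp add: power_Suc2)
  have a: "t > 2 * int (Suc p) \<longrightarrow> (loop_val ^ Suc p) $$ t = 0"
    unfolding e lv_mult using Suc.IH[of "t - 2"] Suc.IH[of "t + 2"] by auto
  have b: "t < - 2 * int (Suc p) \<longrightarrow> (loop_val ^ Suc p) $$ t = 0"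
    unfolding e lv_mult using Suc.IH[of "t - 2"] Suc.IH[of "t + 2"] by auto
  have c: "(loop_val ^ Suc p) $$ (- 2 * int (Suc p)) = (-1) ^ Suc p"
  proof -
    have "(loop_val ^ Suc p) $$ (- 2 * int (Suc p)) =
       - (loop_val ^ p) $$ (- 2 * int (Suc p) - 2) - (loop_val ^ p) $$ (- 2 * int p)"
      unfolding e lv_mult by simp
    moreover have "(loop_val ^ p) $$ (- 2 * int (Suc p) - 2) = 0"
      using Suc.IH[of "- 2 * int (Suc p) - 2"] by auto
    ultimately show ?thesis using Suc.IH by simp
  qed
  show ?case using a b c by blast
qed

lemma term_nth: "(fls_X_intpow e * (f :: int fls)) $$ t = f $$ (t - e)"
  by (simp add: fls_X_intpow_times_conv_shift)

lemma bracket_nth: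
  "kauffman_bracket n w $$ t =
     (\<Sum>S\<in>Pow {..<length w}. (loop_val ^ (num_loops n w S - 1)) $$ (t - state_exp w S))"
  unfolding kauffman_bracket_def fls_nth_sum term_nth ..

lemma jones_nth:
  "jones_A n w $$ t = (-1) ^ nat \<bar>writhe w\<bar> * kauffman_bracket n w $$ (t + 3 * writhe w)"
  unfolding jones_A_def mult.assoc fls_mult_const_nth term_nth by simp






lemma wr_gen: "(\<And>g. g \<in> set w \<Longrightarrow> g > 0) \<Longrightarrow> writhe w = - int (length w)"
  unfolding writhe_def by (induction w) auto

context
  fixes w :: "int list"
  assumes bw: "braid_word 3 w" and pos: "\<And>g. g \<in> set w \<Longrightarrow> g > 0"
begin

lemma se: "S \<subseteq> {..<length w} \<Longrightarrow> state_exp w S = 2 * int (card S) - int (length w)"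
proof -
  assume S: "S \<subseteq> {..<length w}"
  have sg: "sgn (w ! j) = 1" if "j < length w" for j
  proof -
    have "w ! j \<in> set w" using that by simp
    hence "w ! j > 0" by (rule pos)
    thus ?thesis by simp
  qed
  have "state_exp w S = (\<Sum>j<length w. if j \<in> S then 1 else -1)"
    unfolding state_exp_def by (rule sum.cong) (simp_all add: sg)
  also have "\<dots> = (\<Sum>j\<in>{..<length w} \<inter> {x. x \<in> S}. 1) + (\<Sum>j\<in>{..<length w} \<inter> - {x. x \<in> S}. -1)"
    by (rule sum.If_cases) simp
  also have "{..<length w} \<inter> {x. x \<in> S} = S" using S by auto
  also have "{..<length w} \<inter> - {x. x \<in> S} = {..<length w} - S" by auto
  also have "card ({..<length w} - S) = length w - card S"
    using S by (simp add: card_Diff_subset finite_subset)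
  moreover have "card S \<le> length w" using card_mono[OF _ S] by simp
  ultimately show ?thesis by simp
qed

lemma jn: "jones_A 3 w $$ t = (-1) ^ length w * kauffman_bracket 3 w $$ (t - 3 * int (length w))"
  using wr_gen[OF pos] by (simp add: jones_nth)

lemma upper:
  assumes "jones_coeff 3 w k \<noteq> 0"
  shows "k \<le> 2 * int (length w) + int (num_loops 3 w {..<length w}) - 1"
proof (rule ccontr)
  assume "\<not> ?thesis"
  hence kb: "k > 2 * int (length w) + int (num_loops 3 w {..<length w}) - 1" by simp
  have "kauffman_bracket 3 w $$ (2 * k - 3 * int (length w)) = 0"
    unfolding bracket_nth
  proof (rule sum.neutral, rule ballI)
    fix S assume "S \<in> Pow {..<length w}"
    hence S: "S \<subseteq> {..<length w}" by simp
    have ch: "card S + num_loops 3 w S \<le> card {..<length w} + num_loops 3 w {..<length w}"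
      by (rule chain(1)[OF bw S]) simp
    have lp: "1 \<le> num_loops 3 w S" by (rule loops_pos) simp
    have "2 * k - 3 * int (length w) - state_exp w S > 2 * int (num_loops 3 w S - 1)"
      using se[OF S] ch lp kb by simp
    thus "(loop_val ^ (num_loops 3 w S - 1)) $$ (2 * k - 3 * int (length w) - state_exp w S) = 0"
      using lv_pow by blast
  qed
  thus False using assms unfolding jones_coeff_def jn by simp
qed

lemma lower: "\<exists>k. jones_coeff 3 w k \<noteq> 0"
proof -
  let ?N = "length w"
  define p0 where "p0 = num_loops 3 w {} - 1"
  have l0: "3 \<le> num_loops 3 w {}" by (rule loops_empty_ge)
  define t0 where "t0 = - int ?N - 2 * int p0"
  have "kauffman_bracket 3 w $$ t0 = (-1) ^ p0"
  proof -
    have fin: "finite (Pow {..<?N})" by simp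
    have "kauffman_bracket 3 w $$ t0 =
      (loop_val ^ (num_loops 3 w {} - 1)) $$ (t0 - state_exp w {}) +
      (\<Sum>S\<in>Pow {..<?N} - {{}}. (loop_val ^ (num_loops 3 w S - 1)) $$ (t0 - state_exp w S))"
      unfolding bracket_nth by (rule sum.remove[OF fin]) simp
    also have "(\<Sum>S\<in>Pow {..<?N} - {{}}. (loop_val ^ (num_loops 3 w S - 1)) $$ (t0 - state_exp w S)) = 0"
    proof (rule sum.neutral, rule ballI)
      fix S assume "S \<in> Pow {..<?N} - {{}}"
      hence S: "S \<subseteq> {..<?N}" "S \<noteq> {}" by auto
      then obtain j where j: "j \<in> S" by blast
      have jN: "j < ?N" using S j by auto
      have ch: "num_loops 3 w S + card {j} \<le> num_loops 3 w {j} + card S"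
        by (rule chain(2)[OF bw _ S(1)]) (use j in simp)
      have l1: "num_loops 3 w {j} \<le> 2" by (rule loops_single[OF bw jN])
      have lp: "1 \<le> num_loops 3 w S" by (rule loops_pos) simp
      have "t0 - state_exp w S < - 2 * int (num_loops 3 w S - 1)"
        using se[OF S(1)] ch l1 lp l0 unfolding t0_def p0_def by simp
      thus "(loop_val ^ (num_loops 3 w S - 1)) $$ (t0 - state_exp w S) = 0"
        using lv_pow by blast
    qed
    also have "state_exp w {} = - int ?N" using se[of "{}"] by simp
    also have "t0 - - int ?N = - 2 * int p0" unfolding t0_def by simp
    finally show ?thesis using lv_pow unfolding p0_def by simp
  qed
  hence "jones_coeff 3 w (int ?N - int p0) \<noteq> 0"
    unfolding jones_coeff_def jn t0_def by (simp add: algebra_simps)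
  thus ?thesis by blast
qed

end






theorem theorem4p11:
  fixes L :: nat and a :: "nat \<Rightarrow> nat"
  assumes "L \<ge> 1"
  shows "jones_deg 3 (alt_word L a)
           \<le> 3 * int (\<Sum>i=1..2*L. a i) - 2 * int L + 2 * int (card {i\<in>{1..2*L}. a i = 0})"
proof -
  define w where "w = alt_word L a"
  have wW: "w = WW a (2 * L)" unfolding w_def alt_WW ..
  have sw: "set w \<subseteq> {1, 2}" unfolding wW by (rule WW_set)
  have pos: "\<And>g. g \<in> set w \<Longrightarrow> g > 0" using sw by auto
  have bw: "braid_word 3 w" unfolding braid_word_def using sw by auto
  have lt: "\<And>j. j < length w \<Longrightarrow> w ! j = 1 \<or> w ! j = 2" using sw nth_mem by blast
  have D: "(\<Sum>i=1..2*L. a i) = length w" unfolding wW WW_len ..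
  define Z where "Z = card {i\<in>{1..2*L}. a i = 0}"
  define P where "P = card {i\<in>{1..2*L}. a i \<noteq> 0}"
  have PZ: "P + Z = 2 * L"
  proof -
    have "{i\<in>{1..2*L}. a i \<noteq> 0} \<union> {i\<in>{1..2*L}. a i = 0} = {1..2*L}" by auto
    moreover have "card ({i\<in>{1..2*L}. a i \<noteq> 0} \<union> {i\<in>{1..2*L}. a i = 0}) = P + Z"
      unfolding P_def Z_def by (rule card_Un_disjoint) auto
    ultimately show ?thesis by simp
  qed
  define B where "B = 3 * int (length w) - 2 * int L + 2 * int Z"
  define K where "K = {k. jones_coeff 3 w k \<noteq> 0}"
  have bound: "k \<le> B" if "k \<in> K" for k
  proof -
    have k: "k \<le> 2 * int (length w) + int (num_loops 3 w {..<length w}) - 1"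
      using upper[OF bw pos] that unfolding K_def by blast
    show ?thesis
    proof (cases "length w = 0")
      case True
      have "num_loops 3 w {..<length w} \<le> 3" using loops_le3[of w "{..<length w}"] True by simp
      moreover have "\<forall>i\<in>{1..2*L}. a i = 0" using D True by simp
      hence "{i\<in>{1..2*L}. a i = 0} = {1..2*L}" by auto
      hence "Z = 2 * L" unfolding Z_def by simp
      ultimately show ?thesis using k True assms unfolding B_def by simp
    next
      case False
      hence N: "length w \<ge> 1" by (simp add: Suc_leI)
      have la: "num_loops 3 w {..<length w} \<le> card (eqset w) + 1 + (if w ! (length w - 1) = w ! 0 then 1 else 0)"
        by (rule loops_all[OF lt N])
      have ne: "w \<noteq> []" using N by auto
      have inv: "int (length w) - int (card (eqset w)) + int Z
        \<ge> int P + (if last w \<noteq> letter (2 * L) then 1 else 0) + (if w ! 0 \<noteq> 1 then 1 else 0)"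
        using WW_inv[of a "2 * L"] ne unfolding wW Z_def P_def by simp
      have l2: "letter (2 * L) = 2" unfolding letter_def by simp
      have last: "last w = w ! (length w - 1)" using ne by (simp add: last_conv_nth)
      have h: "w ! 0 = 1 \<or> w ! 0 = 2" using lt[of 0] ne by simp
      have t: "w ! (length w - 1) = 1 \<or> w ! (length w - 1) = 2" using lt[of "length w - 1"] N by simp
      have "(if w ! (length w - 1) = w ! 0 then 1 else 0) \<le>
            (if last w \<noteq> letter (2 * L) then 1 else 0) + (if w ! 0 \<noteq> 1 then 1 else (0::int))"
        unfolding l2 last using h t by auto
      moreover have la': "int (num_loops 3 w {..<length w}) \<le> int (card (eqset w)) + 1 + (if w ! (length w - 1) = w ! 0 then 1 else (0::int))"
        using la by (auto split: if_splits)
      moreover have PZ': "int P + int Z = 2 * int L" using arg_cong[OF PZ, of int] by simp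
      ultimately show ?thesis using k inv unfolding B_def by linarith
    qed
  qed
  have ne: "K \<noteq> {}" using lower[OF bw pos] unfolding K_def by blast
  have fin: "finite K"
  proof -
    define d where "d = fls_subdegree (jones_A 3 w)"
    have "K \<subseteq> {d div 2 .. B}"
    proof
      fix k assume kK: "k \<in> K"
      hence "jones_A 3 w $$ (2 * k) \<noteq> 0" unfolding K_def jones_coeff_def by simp
      hence "\<not> 2 * k < d" unfolding d_def using fls_eq0_below_subdegree by blast
      hence "d div 2 \<le> k" by linarith
      thus "k \<in> {d div 2 .. B}" using bound[OF kK] by simp
    qed
    thus ?thesis using finite_subset by blast
  qed
  have "Max K \<le> B" using Max_le_iff[OF fin ne] bound by blast
  thus ?thesis unfolding jones_deg_def K_def B_def Z_def D w_def .
qed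



end
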